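(* Let $t$ be a closed $\lambda$-term. If there is a derivation $\pi\triangleright\ \vdash^{(m,e)} t : L$ (with empty type context) in the silly multi type system, then there are an abstraction $v$ and a reduction sequence $d: t\to_{\beta_v}^* v$ with $|d|\leq m$.
   Context: $\lambda$-terms $t ::= x\mid\lambda x.t\mid tu$; values are abstractions. CbV contexts $V ::= \langle\cdot\rangle\mid tV\mid Vt$; root rule $(\lambda x.t)v\mapsto_{\beta_v} t\{x:=v\}$ for $v$ a value (capture-avoiding meta-level substitution); $\to_{\beta_v}$ is its closure under CbV contexts; $|d|$ is the length of $d$. Silly multi types: linear types $L ::= \mathtt{n} \mid M\multimap L$; multi types $M ::= [L_i]_{i\in I}$ finite multisets ($\mathbf{0}$ empty, $\uplus$ sum). Type contexts $\Gamma$ map variables to multi types with finite support; $\uplus$ pointwise; $\Gamma\setminus\!\!\setminus x$ sets $x$ to $\mathbf{0}$. Rules: (ax) $x:[L]\vdash^{(0,1)} x:L$; (many) from $(\Gamma_i\vdash^{(m_i,e_i)} t : L_i)_{i\in I}$, $I$ finite possibly empty, infer $\uplus_i\Gamma_i\vdash^{(\sum m_i,\sum e_i)} t : [L_i]_{i\in I}$; ($\mathrm{ax}_\lambda$) $\vdash^{(0,0)}\lambda x.t:\mathtt{n}$; ($\lambda$) from $\Gamma\vdash^{(m,e)}t:L$ infer $\Gamma\setminus\!\!\setminus x\vdash^{(m,e)}\lambda x.t:\Gamma(x)\multimap L$; (@) from $\Gamma\vdash^{(m,e)} t : M\multimap L$ and $\Delta\vdash^{(m',e')} u : M\uplus[\mathtt{n}]$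 infer $\Gamma\uplus\Delta\vdash^{(m+m'+1,e+e')} tu : L$. (There is also a rule for explicit substitutions, irrelevant for $\lambda$-terms.) *)

theory Defs
  imports "HOL-Library.Multiset"
begin

text \<open>Lambda-terms with de Bruijn indices (terms modulo alpha-equivalence).\<close>
datatype trm = Var nat | Abs trm | App trm trm

fun is_val :: "trm \<Rightarrow> bool" where
  "is_val (Abs _) = True"
| "is_val _ = False"

fun closed_at :: "nat \<Rightarrow> trm \<Rightarrow> bool" where
  "closed_at k (Var i) = (i < k)"
| "closed_at k (Abs t) = closed_at (Suc k) t"
| "closed_at k (App t u) = (closed_at k t \<and> closed_at k u)"

definition closed :: "trm \<Rightarrow> bool" where
  "closed t = closed_at 0 t"

fun lift :: "nat \<Rightarrow> trm \<Rightarrow> trm" where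
  "lift k (Var i) = (if i < k then Var i else Var (Suc i))"
| "lift k (Abs t) = Abs (lift (Suc k) t)"
| "lift k (App t u) = App (lift k t) (lift k u)"

text \<open>Capture-avoiding substitution t{k:=s}, removing binder k.\<close>
fun subst :: "trm \<Rightarrow> nat \<Rightarrow> trm \<Rightarrow> trm" where
  "subst (Var i) k s = (if k < i then Var (i - 1) else if i = k then s else Var i)"
| "subst (Abs t) k s = Abs (subst t (Suc k) (lift 0 s))"
| "subst (App t u) k s = App (subst t k s) (subst u k s)"

text \<open>CbV reduction: root beta_v closed under contexts V ::= <> | t V | V t (not under lambda).\<close>
inductive betav :: "trm \<Rightarrow> trm \<Rightarrow> bool" where
  root: "is_val v \<Longrightarrow> betav (App (Abs t) v) (subst t 0 v)"
| appL: "betav t t' \<Longrightarrow> betav (App t u) (App t' u)"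
| appR: "betav u u' \<Longrightarrow> betav (App t u) (App t u')"

datatype lty = N | Arr "lty multiset" lty

type_synonym ctx = "nat \<Rightarrow> lty multiset"

definition empty_ctx :: ctx where "empty_ctx = (\<lambda>_. {#})"

definition ctx_sum :: "ctx \<Rightarrow> ctx \<Rightarrow> ctx" where
  "ctx_sum \<Gamma> \<Delta> = (\<lambda>x. \<Gamma> x + \<Delta> x)"

text \<open>Linear judgement  lder \<Gamma> m e t L  (\<Gamma> \<turnstile>^(m,e) t : L) and
  multi judgement  mder \<Gamma> m e t M.  Rule (many) over a finite family is
  generated by adding one linear derivation at a time.\<close>
inductive lder :: "ctx \<Rightarrow> nat \<Rightarrow> nat \<Rightarrow> trm \<Rightarrow> lty \<Rightarrow> bool"
  and mder :: "ctx \<Rightarrow> nat \<Rightarrow> nat \<Rightarrow> trm \<Rightarrow> lty multiset \<Rightarrow> bool" where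
  ax: "lder (empty_ctx(x := {#L#})) 0 1 (Var x) L"
| ax_lam: "lder empty_ctx 0 0 (Abs t) N"
| lam: "lder \<Gamma> m e t L \<Longrightarrow> lder (\<lambda>x. \<Gamma> (Suc x)) m e (Abs t) (Arr (\<Gamma> 0) L)"
| app: "lder \<Gamma> m e t (Arr M L) \<Longrightarrow> mder \<Delta> m' e' u (M + {#N#})
        \<Longrightarrow> lder (ctx_sum \<Gamma> \<Delta>) (m + m' + 1) (e + e') (App t u) L"
| many_empty: "mder empty_ctx 0 0 t {#}"
| many_add: "lder \<Gamma> m e t L \<Longrightarrow> mder \<Delta> m' e' t M
        \<Longrightarrow> mder (ctx_sum \<Gamma> \<Delta>) (m + m') (e + e') t (add_mset L M)"

end

theory Submission
  imports Defs
begin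

lemma ctx_sum_empty_iff[simp]: "ctx_sum G D = empty_ctx \<longleftrightarrow> G = empty_ctx \<and> D = empty_ctx"
  unfolding ctx_sum_def empty_ctx_def by (auto simp: fun_eq_iff)

lemma ctx_sum_empty_l[simp]: "ctx_sum empty_ctx D = D" and ctx_sum_empty_r[simp]: "ctx_sum D empty_ctx = D"
  unfolding ctx_sum_def empty_ctx_def by auto

lemma ctx_sum_assoc: "ctx_sum (ctx_sum A B) C = ctx_sum A (ctx_sum B C)"
  unfolding ctx_sum_def by (auto simp: add.assoc)

lemma ctx_sum_comm: "ctx_sum A B = ctx_sum B A"
  unfolding ctx_sum_def by (auto simp: add.commute)

lemma ctx_sum_lc: "ctx_sum A (ctx_sum B C) = ctx_sum B (ctx_sum A C)"
  unfolding ctx_sum_def by (auto simp: add_ac)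

lemma mset_split: assumes that: "add_mset L M = A + B" shows "
   (\<exists>A'. A = add_mset L A' \<and> M = A' + B) \<or> (\<exists>B'. B = add_mset L B' \<and> M = A + B')"
proof (cases "L \<in># A")
  case True
  then obtain A' where "A = add_mset L A'" by (meson mset_add)
  then show ?thesis using that by auto
next
  case False
  then have "L \<in># B" using that by (metis union_iff union_single_eq_member add_mset_add_single)
  then obtain B' where "B = add_mset L B'" by (meson mset_add)
  then show ?thesis using that by auto
qed

lemma mder_split:
  "mder D m e s M \<Longrightarrow> M = A + B \<Longrightarrow> \<exists>D1 D2 m1 m2 e1 e2. mder D1 m1 e1 s A \<and> mder D2 m2 e2 s B
     \<and> D = ctx_sum D1 D2 \<and> m = m1 + m2"
proof (induction arbitrary: A B rule: lder_mder.inducts(2)[where ?P1.0="\<lambda>_ _ _ _ _. True"])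
  case (many_empty t)
  then show ?case
    by (intro exI[of _ empty_ctx] exI[of _ 0] conjI) (auto intro: lder_mder.many_empty)
next
  case (many_add G m e t L D m' e' M)
  note 6 = many_add
  from mset_split[OF 6(5)] show ?case
  proof
    assume "\<exists>A'. A = add_mset L A' \<and> M = A' + B"
    then obtain A' where A: "A = add_mset L A'" "M = A' + B" by blast
    from 6(4)[OF A(2)] obtain D1 D2 m1 m2 e1 e2 where
      h: "mder D1 m1 e1 t A'" "mder D2 m2 e2 t B" "D = ctx_sum D1 D2" "m' = m1 + m2" by blast
    have "mder (ctx_sum G D1) (m + m1) (e + e1) t A" using lder_mder.many_add[OF 6(1) h(1)] A by simp
    moreover have "ctx_sum G D = ctx_sum (ctx_sum G D1) D2" using h by (simp add: ctx_sum_assoc)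
    moreover have "m + m' = (m + m1) + m2" using h by simp
    ultimately show ?thesis using h by blast
  next
    assume "\<exists>B'. B = add_mset L B' \<and> M = A + B'"
    then obtain B' where B: "B = add_mset L B'" "M = A + B'" by blast
    from 6(4)[OF B(2)] obtain D1 D2 m1 m2 e1 e2 where
      h: "mder D1 m1 e1 t A" "mder D2 m2 e2 t B'" "D = ctx_sum D1 D2" "m' = m1 + m2" by blast
    have "mder (ctx_sum G D2) (m + m2) (e + e2) t B" using lder_mder.many_add[OF 6(1) h(2)] B by simp
    moreover have "ctx_sum G D = ctx_sum D1 (ctx_sum G D2)" using h by (simp add: ctx_sum_lc)
    moreover have "m + m' = m1 + (m + m2)" using h by simp
    ultimately show ?thesis using h by blast
  qed
qed auto

inductive_cases mder_emptyE: "mder D m e s {#}"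
inductive_cases mder_addE: "mder D m e s (add_mset L M)"
inductive_cases lder_AbsE: "lder G m e (Abs t) T"
inductive_cases lder_AppE: "lder G m e (App t u) T"
inductive_cases lder_VarE: "lder G m e (Var i) T"

lemma mder_empty_inv: "mder D m e s {#} \<Longrightarrow> D = empty_ctx \<and> m = 0"
  by (erule mder_emptyE) auto

lemma mder_single_inv: "mder empty_ctx m e s {#L#} \<Longrightarrow> \<exists>e'. lder empty_ctx m e' s L"
  by (erule mder_addE) (auto dest!: mder_empty_inv)

lemma closed_at_mono: "closed_at j s \<Longrightarrow> j \<le> k \<Longrightarrow> closed_at k s"
  by (induction j s arbitrary: k rule: closed_at.induct) auto

lemma lift_closed: "closed_at j s \<Longrightarrow> j \<le> k \<Longrightarrow> lift k s = s"
  by (induction j s arbitrary: k rule: closed_at.induct) auto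

definition sh :: "nat \<Rightarrow> ctx \<Rightarrow> ctx" where
  "sh k G = (\<lambda>x. if x < k then G x else G (Suc x))"

lemma sh_sum: "sh k (ctx_sum G D) = ctx_sum (sh k G) (sh k D)"
  unfolding sh_def ctx_sum_def by auto

lemma sh_empty[simp]: "sh k empty_ctx = empty_ctx"
  unfolding sh_def empty_ctx_def by auto

lemma subst_lemma:
  shows "lder G m e t L \<Longrightarrow> closed_at 0 s \<Longrightarrow> mder empty_ctx ma ea s (G k) \<Longrightarrow>
           \<exists>e'. lder (sh k G) (m + ma) e' (subst t k s) L"
    and "mder G m e t M \<Longrightarrow> closed_at 0 s \<Longrightarrow> mder empty_ctx ma ea s (G k) \<Longrightarrow>
           \<exists>e'. mder (sh k G) (m + ma) e' (subst t k s) M"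
proof (induction arbitrary: k ma ea and k ma ea rule: lder_mder.inducts)
  case (ax x L)
  show ?case
  proof (cases "x = k")
    case True
    then have "mder empty_ctx ma ea s {#L#}" using ax by simp
    then obtain e' where l: "lder empty_ctx ma e' s L" using mder_single_inv by blast
    have shq: "sh k (empty_ctx(x := {#L#})) = empty_ctx"
      using True unfolding sh_def empty_ctx_def by (auto simp: fun_eq_iff)
    have eq: "subst (Var x) k s = s" using True by simp
    show ?thesis by (simp only: shq eq add_0) (rule exI, rule l)
  next
    case False
    then have "ma = 0" using ax mder_empty_inv by (simp add: empty_ctx_def)
    show ?thesis
    proof (cases "k < x")
      case True
      have shq: "sh k (empty_ctx(x := {#L#})) = empty_ctx(x - 1 := {#L#})"
        using True unfolding sh_def empty_ctx_def by (auto simp: fun_eq_iff)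
      have eq: "subst (Var x) k s = Var (x - 1)" using True by simp
      show ?thesis by (simp only: shq eq \<open>ma = 0\<close> add_0) (rule exI, rule lder_mder.ax)
    next
      case F: False
      have shq: "sh k (empty_ctx(x := {#L#})) = empty_ctx(x := {#L#})"
        using F False unfolding sh_def empty_ctx_def by (auto simp: fun_eq_iff)
      have eq: "subst (Var x) k s = Var x" using F False by simp
      show ?thesis by (simp only: shq eq \<open>ma = 0\<close> add_0) (rule exI, rule lder_mder.ax)
    qed
  qed
next
  case (ax_lam t)
  then have "ma = 0" using mder_empty_inv by (simp add: empty_ctx_def)
  then show ?case by (auto intro: lder_mder.ax_lam)
next
  case (lam G m e t L)
  have "lift 0 s = s" using lift_closed lam by auto
  have pm: "mder empty_ctx ma ea s (G (Suc k))" using lam.prems by simp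
  from lam.IH[OF lam.prems(1) pm] obtain e' where
    "lder (sh (Suc k) G) (m + ma) e' (subst t (Suc k) s) L" by auto
  from lder_mder.lam[OF this] have "lder (\<lambda>x. sh (Suc k) G (Suc x)) (m + ma) e' (Abs (subst t (Suc k) s)) (Arr (G 0) L)"
    by (simp add: sh_def)
  moreover have "(\<lambda>x. sh (Suc k) G (Suc x)) = sh k (\<lambda>x. G (Suc x))" by (auto simp: sh_def fun_eq_iff)
  ultimately show ?case using \<open>lift 0 s = s\<close> by auto
next
  case (app G m e t M L D m' e' u)
  have pm: "mder empty_ctx ma ea s (G k + D k)" using app.prems by (simp add: ctx_sum_def)
  from mder_split[OF pm refl] obtain D1 D2 m1 m2 e1 e2 where
    h: "mder D1 m1 e1 s (G k)" "mder D2 m2 e2 s (D k)" "empty_ctx = ctx_sum D1 D2" "ma = m1 + m2"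
    by blast
  have "D1 = empty_ctx" "D2 = empty_ctx" using h(3)[symmetric] by auto
  then obtain f1 f2 where "lder (sh k G) (m + m1) f1 (subst t k s) (Arr M L)"
    "mder (sh k D) (m' + m2) f2 (subst u k s) (M + {#N#})"
    using app.IH app.prems h by blast
  note r = lder_mder.app[OF this]
  have "m + m1 + (m' + m2) + 1 = m + m' + 1 + ma" using h(4) by simp
  then show ?case using r by (simp only: sh_sum subst.simps) (rule exI, assumption)
next
  case (many_empty t)
  then have "ma = 0" using mder_empty_inv by (simp add: empty_ctx_def)
  then show ?case by (auto intro: lder_mder.many_empty)
next
  case (many_add G m e t L D m' e' M)
  have pm: "mder empty_ctx ma ea s (G k + D k)" using many_add.prems by (simp add: ctx_sum_def)
  from mder_split[OF pm refl] obtain D1 D2 m1 m2 e1 e2 where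
    h: "mder D1 m1 e1 s (G k)" "mder D2 m2 e2 s (D k)" "empty_ctx = ctx_sum D1 D2" "ma = m1 + m2"
    by blast
  have "D1 = empty_ctx" "D2 = empty_ctx" using h(3)[symmetric] by auto
  then obtain f1 f2 where "lder (sh k G) (m + m1) f1 (subst t k s) L"
    "mder (sh k D) (m' + m2) f2 (subst t k s) M"
    using many_add.IH many_add.prems h by blast
  from lder_mder.many_add[OF this] show ?case using h(4) by (auto simp: sh_sum add_ac)
qed

lemma closed_subst: "closed_at (Suc n) t \<Longrightarrow> closed_at 0 s \<Longrightarrow> k \<le> n \<Longrightarrow> closed_at n (subst t k s)"
proof (induction t arbitrary: n k)
  case (Var i)
  then show ?case using closed_at_mono[of 0 s n] by auto
next
  case (Abs t)
  have "lift 0 s = s" using lift_closed Abs by auto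
  then show ?case using Abs by auto
qed auto

lemma closed_betav: "betav t t' \<Longrightarrow> closed_at 0 t \<Longrightarrow> closed_at 0 t'"
  by (induction rule: betav.induct) (auto intro: closed_subst)

lemma mder_sr: "mder G m e u M \<Longrightarrow> G = empty_ctx \<Longrightarrow>
   (\<forall>m e L. lder empty_ctx m e u L \<longrightarrow> (\<exists>m' e'. m' < m \<and> lder empty_ctx m' e' u' L)) \<Longrightarrow>
   \<exists>m' e'. mder empty_ctx m' e' u' M \<and> m' \<le> m \<and> (M \<noteq> {#} \<longrightarrow> m' < m)"
proof (induction rule: lder_mder.inducts(2)[where ?P1.0="\<lambda>_ _ _ _ _. True"])
  case (many_empty t)
  then show ?case by (auto intro: lder_mder.many_empty)
next
  case (many_add G m e t L D m' e' M)
  then have G: "G = empty_ctx" and D: "D = empty_ctx" by auto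
  from many_add.prems(2) many_add.hyps(1) G obtain m1 e1 where a: "m1 < m" "lder empty_ctx m1 e1 u' L" by blast
  from many_add.IH D many_add.prems(2) obtain m2 e2 where b: "mder empty_ctx m2 e2 u' M" "m2 \<le> m'" by blast
  from lder_mder.many_add[OF a(2) b(1)] a b show ?case by force
qed auto

lemma sr: "betav t t' \<Longrightarrow> closed_at 0 t \<Longrightarrow> lder empty_ctx m e t L \<Longrightarrow> \<exists>m' e'. m' < m \<and> lder empty_ctx m' e' t' L"
proof (induction arbitrary: m e L rule: betav.induct)
  case (root v t)
  obtain G D m1 e1 M m2 e2 where
    h: "empty_ctx = ctx_sum G D" "m = Suc (m1 + m2)" "lder G m1 e1 (Abs t) (Arr M L)" "mder D m2 e2 v (add_mset N M)"
    by (rule lder_AppE[OF root.prems(2)]) blast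
  have G: "G = empty_ctx" and D: "D = empty_ctx" using h(1)[symmetric] by auto
  obtain G0 where g: "G = (\<lambda>x. G0 (Suc x))" "M = G0 0" "lder G0 m1 e1 t L"
    by (rule lder_AbsE[OF h(3)]) auto
  have am: "add_mset N M = M + {#N#}" by simp
  obtain D1 D2 ma mb ea eb where
    s: "mder D1 ma ea v M" "mder D2 mb eb v {#N#}" "D = ctx_sum D1 D2" "m2 = ma + mb"
    using mder_split[OF h(4) am] by blast
  have "ctx_sum D1 D2 = empty_ctx" using s(3) D by simp
  then have "D1 = empty_ctx" by simp
  then have sv: "mder empty_ctx ma ea v (G0 0)" using s(1) g(2) by simp
  have cv: "closed_at 0 v" using root.prems by simp
  obtain e' where r: "lder (sh 0 G0) (m1 + ma) e' (subst t 0 v) L"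
    using subst_lemma(1)[OF g(3) cv sv] by blast
  have "sh 0 G0 = empty_ctx" using G g unfolding sh_def by auto
  then have r2: "lder empty_ctx (m1 + ma) e' (subst t 0 v) L" using r by simp
  have "m1 + ma < m" using h(2) s(4) by simp
  then show ?case using r2 by blast
next
  case (appL t t' u)
  obtain G D m1 e1 M m2 e2 where
    h: "empty_ctx = ctx_sum G D" "m = Suc (m1 + m2)" "lder G m1 e1 t (Arr M L)" "mder D m2 e2 u (add_mset N M)"
    by (rule lder_AppE[OF appL.prems(2)]) blast
  have G: "G = empty_ctx" and D: "D = empty_ctx" using h(1)[symmetric] by auto
  have ct: "closed_at 0 t" using appL.prems(1) by simp
  have lt: "lder empty_ctx m1 e1 t (Arr M L)" using h(3) G by simp
  obtain m' e' where a: "m' < m1" "lder empty_ctx m' e' t' (Arr M L)" using appL.IH[OF ct lt] by blast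
  have hu: "mder empty_ctx m2 e2 u (M + {#N#})" using h(4) D by simp
  have "lder (ctx_sum empty_ctx empty_ctx) (m' + m2 + 1) (e' + e2) (App t' u) L"
    by (rule lder_mder.app[OF a(2) hu])
  then have "lder empty_ctx (m' + m2 + 1) (e' + e2) (App t' u) L" by simp
  moreover have "m' + m2 + 1 < m" using a(1) h(2) by simp
  ultimately show ?case by blast
next
  case (appR u u' t)
  obtain G D m1 e1 M m2 e2 where
    h: "empty_ctx = ctx_sum G D" "m = Suc (m1 + m2)" "lder G m1 e1 t (Arr M L)" "mder D m2 e2 u (add_mset N M)"
    by (rule lder_AppE[OF appR.prems(2)]) blast
  have G: "G = empty_ctx" and D: "D = empty_ctx" using h(1)[symmetric] by auto
  have cu: "closed_at 0 u" using appR.prems(1) by simp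
  have "\<forall>m e L. lder empty_ctx m e u L \<longrightarrow> (\<exists>m' e'. m' < m \<and> lder empty_ctx m' e' u' L)"
    using appR.IH[OF cu] by blast
  from mder_sr[OF h(4) D this] obtain m' e' where b: "mder empty_ctx m' e' u' (M + {#N#})" "m' < m2" by auto
  have lt: "lder empty_ctx m1 e1 t (Arr M L)" using h(3) G by simp
  have "lder (ctx_sum empty_ctx empty_ctx) (m1 + m' + 1) (e1 + e') (App t u') L"
    by (rule lder_mder.app[OF lt b(1)])
  then have "lder empty_ctx (m1 + m' + 1) (e1 + e') (App t u') L" by simp
  moreover have "m1 + m' + 1 < m" using b(2) h(2) by simp
  ultimately show ?case by blast
qed

lemma mder_nonempty: "mder empty_ctx m e u (add_mset L M) \<Longrightarrow> \<exists>D1 m' e' L'. lder D1 m' e' u L' \<and> D1 = empty_ctx"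
  apply (erule mder_addE)
  apply (drule sym)
  apply simp
  apply blast
  done

lemma progress: "closed_at 0 t \<Longrightarrow> lder empty_ctx m e t L \<Longrightarrow> \<not> is_val t \<Longrightarrow> \<exists>t'. betav t t'"
proof (induction t arbitrary: m e L)
  case (App t u)
  obtain G D m1 e1 M m2 e2 where
    h: "empty_ctx = ctx_sum G D" "lder G m1 e1 t (Arr M L)" "mder D m2 e2 u (add_mset N M)"
    by (rule lder_AppE[OF App.prems(2)]) blast
  have G: "G = empty_ctx" and D: "D = empty_ctx" using h(1)[symmetric] by auto
  show ?case
  proof (cases "is_val t")
    case False
    have ct: "closed_at 0 t" using App.prems(1) by simp
    have lt: "lder empty_ctx m1 e1 t (Arr M L)" using h G by simp
    obtain t' where "betav t t'" using App.IH(1)[OF ct lt False] by blast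
    then show ?thesis by (blast intro: betav.appL)
  next
    case True
    then obtain b where b: "t = Abs b" by (cases t) auto
    show ?thesis
    proof (cases "is_val u")
      case True
      then show ?thesis using b betav.root by blast
    next
      case False
      obtain D1 mm ee L' where l: "lder D1 mm ee u L'" "D1 = empty_ctx"
        using mder_nonempty h(3) D by blast
      have cu: "closed_at 0 u" using App.prems(1) by simp
      have lu: "lder empty_ctx mm ee u L'" using l by simp
      obtain u' where "betav u u'" using App.IH(2)[OF cu lu False] by blast
      then show ?thesis by (blast intro: betav.appR)
    qed
  qed
qed auto

theorem theorem7p2:
  assumes "closed t"
    and "lder empty_ctx m e t L"
  shows "\<exists>v n. is_val v \<and> (betav ^^ n) t v \<and> n \<le> m"
  using assms
proof (induction m arbitrary: t e rule: less_induct)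
  case (less m)
  show ?case
  proof (cases "is_val t")
    case True
    then show ?thesis by (intro exI[of _ t] exI[of _ 0]) auto
  next
    case False
    have c0: "closed_at 0 t" using less.prems(1) unfolding closed_def .
    obtain t' where st: "betav t t'" using progress[OF c0 less.prems(2) False] by blast
    obtain m' e' where mm: "m' < m" "lder empty_ctx m' e' t' L" using sr[OF st c0 less.prems(2)] by blast
    have "closed t'" using closed_betav[OF st c0] unfolding closed_def .
    obtain v n where "is_val v" "(betav ^^ n) t' v" "n \<le> m'" using less.IH[OF mm(1) \<open>closed t'\<close> mm(2)] by blast
    moreover have "(betav ^^ Suc n) t v" using relpowp_Suc_I2[where P=betav, OF st \<open>(betav ^^ n) t' v\<close>] .
    ultimately show ?thesis using \<open>m' < m\<close> by (intro exI[of _ v] exI[of _ "Suc n"]) auto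
  qed
qed

end
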